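(* For every $k\ge 2$, every $k$-partite $k$-graph $F$ belongs to $\mathbf{COVER}_k^{\cdot,k-1}$.
   Context: A $k$-graph $H$ has edge set $E(H)\subseteq\binom{V(H)}{k}$; $\delta_{k-1}(H)$ is the minimum over $(k-1)$-subsets $S$ of the number of edges containing $S$. A $k$-graph $F$ is $k$-partite if $V(F)$ can be partitioned into $k$ classes such that every edge meets each class in exactly one vertex. An $(n,p,\mu,\cdot)$ $k$-graph is a $k$-graph $H$ on a vertex set $V$ with $|V|=n$ such that for all $X_1,\dots,X_k\subseteq V$, the number of $k$-tuples $(x_1,\dots,x_k)\in X_1\times\cdots\times X_k$ with $\{x_1,\dots,x_k\}\in E(H)$ is at least $p|X_1|\cdots|X_k|-\mu n^k$. $\mathbf{COVER}_k^{\cdot,k-1}$ is the class of $k$-graphs $F$ such that for all $0<p,\alpha<1$ there exist $n_0$ and $\mu>0$ such that in every $(n,p,\mu,\cdot)$ $k$-graph $H$ with $\delta_{k-1}(H)\ge\alpha n$ and $n\ge n_0$ every vertex lies in a copy of $F$. *)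

theory Defs
  imports Main "HOL-Library.FuncSet" Complex_Main
begin

definition kgraph :: "nat \<Rightarrow> 'a set \<Rightarrow> 'a set set \<Rightarrow> bool" where
  "kgraph k V E \<longleftrightarrow> finite V \<and> (\<forall>e\<in>E. e \<subseteq> V \<and> card e = k)"

definition min_codeg_ge :: "nat \<Rightarrow> 'a set \<Rightarrow> 'a set set \<Rightarrow> real \<Rightarrow> bool" where
  "min_codeg_ge k V E d \<longleftrightarrow>
     (\<forall>S. S \<subseteq> V \<and> card S = k - 1 \<longrightarrow> real (card {e\<in>E. S \<subseteq> e}) \<ge> d)"

definition kpartite :: "nat \<Rightarrow> 'a set \<Rightarrow> 'a set set \<Rightarrow> bool" where
  "kpartite k V E \<longleftrightarrow>
     (\<exists>c. c ` V = {..<k} \<and>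
          (\<forall>e\<in>E. \<forall>i<k. card {v\<in>e. c v = i} = 1))"

text \<open>(n,p,mu,.) k-graph: k-tuples (x_0,...,x_{k-1}) are functions in PiE {..<k} X.\<close>
definition dense_kgraph :: "nat \<Rightarrow> 'a set \<Rightarrow> 'a set set \<Rightarrow> real \<Rightarrow> real \<Rightarrow> bool" where
  "dense_kgraph k V E p \<mu> \<longleftrightarrow>
     kgraph k V E \<and>
     (\<forall>X. (\<forall>i<k. X i \<subseteq> V) \<longrightarrow>
        real (card {x \<in> PiE {..<k} X. x ` {..<k} \<in> E})
          \<ge> p * (\<Prod>i<k. real (card (X i))) - \<mu> * real (card V) ^ k)"

definition vertex_in_copy ::
  "'b set \<Rightarrow> 'b set set \<Rightarrow> 'a set \<Rightarrow> 'a set set \<Rightarrow> 'a \<Rightarrow> bool" where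
  "vertex_in_copy VF EF V E v \<longleftrightarrow>
     (\<exists>\<phi>. inj_on \<phi> VF \<and> \<phi> ` VF \<subseteq> V \<and> (\<forall>f\<in>EF. \<phi> ` f \<in> E) \<and> v \<in> \<phi> ` VF)"

text \<open>The class COVER_k^{.,k-1}. Host graphs H have vertex set a finite set of naturals
  (no loss of generality: every finite vertex set can be relabelled).\<close>
definition COVER :: "nat \<Rightarrow> 'b set \<Rightarrow> 'b set set \<Rightarrow> bool" where
  "COVER k VF EF \<longleftrightarrow>
     (\<forall>p \<alpha>::real. 0 < p \<and> p < 1 \<and> 0 < \<alpha> \<and> \<alpha> < 1 \<longrightarrow>
        (\<exists>n0::nat. \<exists>\<mu>::real. \<mu> > 0 \<and>
           (\<forall>(V::nat set) E. dense_kgraph k V E p \<mu> \<and>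
               min_codeg_ge k V E (\<alpha> * real (card V)) \<and> card V \<ge> n0
               \<longrightarrow> (\<forall>v\<in>V. vertex_in_copy VF EF V E v))))"

end

theory Submission
  imports Defs
begin

lemma card_link:
  assumes G: "G \<subseteq> {e. e \<subseteq> V \<and> card e = Suc m}" and fS: "finite S" and S: "card S = m"
  shows "card {e\<in>G. S \<subseteq> e} = card {w\<in>V. w \<notin> S \<and> insert w S \<in> G}"
proof -
  have "bij_betw (\<lambda>w. insert w S) {w\<in>V. w \<notin> S \<and> insert w S \<in> G} {e\<in>G. S \<subseteq> e}"
  proof (rule bij_betwI')
    fix x y assume "x \<in> {w\<in>V. w \<notin> S \<and> insert w S \<in> G}" "y \<in> {w\<in>V. w \<notin> S \<and> insert w S \<in> G}"
    then show "(insert x S = insert y S) = (x = y)" by blast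
  next
    fix x assume "x \<in> {w\<in>V. w \<notin> S \<and> insert w S \<in> G}" then show "insert x S \<in> {e\<in>G. S \<subseteq> e}" by auto
  next
    fix e assume e: "e \<in> {e\<in>G. S \<subseteq> e}"
    then have ce1: "card e = Suc m" "e \<subseteq> V" using G by auto
    then have ce: "card e = Suc m" "e \<subseteq> V" "finite e" by (auto intro: card_ge_0_finite)
    have "card (e - S) = 1" using e ce S by (simp add: card_Diff_subset fS)
    then obtain w where w: "e - S = {w}" by (meson card_1_singletonE)
    then have "e = insert w S" "w \<notin> S" using e by auto
    then show "\<exists>x\<in>{w\<in>V. w \<notin> S \<and> insert w S \<in> G}. e = insert x S" using e ce by auto
  qed
  then show ?thesis by (simp add: bij_betw_same_card)
qed

lemma exists_ge_avg:
  fixes f :: "'a \<Rightarrow> real"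
  assumes "finite X" "X \<noteq> {}" "sum f X \<ge> s"
  shows "\<exists>x\<in>X. f x * real (card X) \<ge> s"
proof (rule ccontr)
  assume "\<not> ?thesis"
  then have "\<forall>x\<in>X. f x < s / real (card X)" using assms
    by (auto simp: field_simps card_gt_0_iff)
  then have "sum f X < sum (\<lambda>_. s / real (card X)) X"
    using assms by (intro sum_strict_mono) auto
  then show False using assms by (simp add: card_gt_0_iff)
qed

lemma greedy:
  fixes V :: "'a set" and R :: "'a \<Rightarrow> 's \<Rightarrow> bool"
  assumes fV: "finite V" and fA: "finite A"
    and deg: "\<forall>S\<in>A. real (card {w\<in>V. R w S}) \<ge> D"
    and W0: "W0 \<subseteq> V" and C0: "C0 \<subseteq> A" and RW0: "\<forall>w\<in>W0. \<forall>S\<in>C0. R w S"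
  shows "card W0 + j < card V \<Longrightarrow> real (card W0 + j) \<le> D / 2 \<Longrightarrow>
    \<exists>W C. W0 \<subseteq> W \<and> W \<subseteq> V \<and> card W = card W0 + j \<and> C \<subseteq> C0 \<and>
       (\<forall>w\<in>W. \<forall>S\<in>C. R w S) \<and> real (card C) \<ge> real (card C0) * (D / (2 * real (card V))) ^ j"
proof (induction j)
  case 0
  then show ?case using W0 RW0 by (intro exI[of _ W0] exI[of _ C0]) auto
next
  case (Suc j)
  then obtain W C where WC: "W0 \<subseteq> W" "W \<subseteq> V" "card W = card W0 + j" "C \<subseteq> C0"
       "\<forall>w\<in>W. \<forall>S\<in>C. R w S" "real (card C) \<ge> real (card C0) * (D / (2 * real (card V))) ^ j"
    by auto
  have fW: "finite W" by (rule finite_subset[OF WC(2) fV])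
  have fC: "finite C" by (rule finite_subset[OF subset_trans[OF WC(4) C0] fA])
  have "card W < card V" using Suc.prems WC by simp
  then have ne: "V - W \<noteq> {}" by (metis Diff_eq_empty_iff card_mono fW leD)
  have "(\<Sum>w\<in>V - W. real (card {S\<in>C. R w S})) = (\<Sum>w\<in>V - W. \<Sum>S\<in>C. (if R w S then 1 else 0::real))"
    using fC by (simp add: sum.If_cases Int_def)
  also have "\<dots> = (\<Sum>S\<in>C. \<Sum>w\<in>V - W. (if R w S then 1 else 0::real))"
    by (rule sum.swap)
  also have "\<dots> = (\<Sum>S\<in>C. real (card {w\<in>V - W. R w S}))"
    using fV by (simp add: sum.If_cases Int_def)
  also have "\<dots> \<ge> (\<Sum>S\<in>C. D / 2)"
  proof (rule sum_mono)
    fix S assume S: "S \<in> C"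
    have "{w\<in>V. R w S} \<subseteq> {w\<in>V - W. R w S} \<union> W" by auto
    then have "card {w\<in>V. R w S} \<le> card ({w\<in>V - W. R w S} \<union> W)"
      by (intro card_mono) (use fV fW in auto)
    also have "\<dots> \<le> card {w\<in>V - W. R w S} + card W" by (rule card_Un_le)
    finally have "card {w\<in>V. R w S} \<le> card {w\<in>V - W. R w S} + card W" .
    moreover have "real (card {w\<in>V. R w S}) \<ge> D" using deg S WC C0 by auto
    ultimately show "D / 2 \<le> real (card {w\<in>V - W. R w S})" using Suc.prems WC by linarith
  qed
  finally have "(\<Sum>w\<in>V - W. real (card {S\<in>C. R w S})) \<ge> real (card C) * (D / 2)" by simp
  then obtain w where w: "w \<in> V - W" "real (card {S\<in>C. R w S}) * real (card (V - W)) \<ge> real (card C) * (D / 2)"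
    using exists_ge_avg[OF _ ne] fV by blast
  have D0: "D \<ge> 0" using Suc.prems by linarith
  have nV: "real (card V) > 0" using Suc.prems by simp
  have "card (V - W) \<le> card V" by (simp add: card_Diff_subset fV fW WC(2))
  then have "real (card {S\<in>C. R w S}) * real (card V) \<ge> real (card C) * (D / 2)"
    using w(2) by (meson mult_left_mono of_nat_0_le_iff of_nat_le_iff order_trans)
  then have cnew: "real (card {S\<in>C. R w S}) \<ge> real (card C) * (D / (2 * real (card V)))"
    using nV by (simp add: field_simps)
  have "real (card C0) * (D / (2 * real (card V))) ^ Suc j
        = (real (card C0) * (D / (2 * real (card V))) ^ j) * (D / (2 * real (card V)))" by simp
  also have "\<dots> \<le> real (card C) * (D / (2 * real (card V)))"
    using WC(6) D0 nV by (intro mult_right_mono) auto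
  also have "\<dots> \<le> real (card {S\<in>C. R w S})" by (rule cnew)
  finally have fin: "real (card C0) * (D / (2 * real (card V))) ^ Suc j \<le> real (card {S\<in>C. R w S})" .
  show ?case
    apply (rule exI[of _ "insert w W"], rule exI[of _ "{S\<in>C. R w S}"])
    using WC w fW fin by auto
qed

definition dg :: "'a set set \<Rightarrow> 'a set \<Rightarrow> nat" where
  "dg G S = card {e\<in>G. S \<subseteq> e}"

definition shadow :: "'a set \<Rightarrow> nat \<Rightarrow> 'a set set \<Rightarrow> 'a set set" where
  "shadow V m G = {S. S \<subseteq> V \<and> card S = m \<and> 0 < dg G S}"

lemma finite_shadow: "finite V \<Longrightarrow> finite (shadow V m G)"
  by (rule finite_subset[of _ "Pow V"]) (auto simp: shadow_def)

lemma card_shadow_le: "finite V \<Longrightarrow> card (shadow V m G) \<le> card V choose m"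
proof -
  assume fV: "finite V"
  have "card (shadow V m G) \<le> card {S. S \<subseteq> V \<and> card S = m}"
    by (rule card_mono) (auto simp: shadow_def fV)
  also have "\<dots> = card V choose m" by (rule n_subsets[OF fV])
  finally show ?thesis .
qed

lemma clean:
  fixes D :: real
  assumes fV: "finite V" and D0: "D \<ge> 0"
  shows "finite G \<Longrightarrow> \<exists>G'\<subseteq>G. (\<forall>S. S \<subseteq> V \<and> card S = m \<longrightarrow> dg G' S = 0 \<or> real (dg G' S) \<ge> D)
     \<and> real (card (G - G')) \<le> D * real (card (shadow V m G))"
proof (induction "card G" arbitrary: G rule: less_induct)
  case less
  show ?case
  proof (cases "\<forall>S. S \<subseteq> V \<and> card S = m \<longrightarrow> dg G S = 0 \<or> real (dg G S) \<ge> D")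
    case True
    then show ?thesis using D0 by (intro exI[of _ G]) auto
  next
    case False
    then obtain S where S: "S \<subseteq> V" "card S = m" "dg G S \<noteq> 0" "real (dg G S) < D" by auto
    define G1 where "G1 = G - {e\<in>G. S \<subseteq> e}"
    have ne: "{e\<in>G. S \<subseteq> e} \<noteq> {}" using S(3) unfolding dg_def by (metis card.empty)
    have fG1: "finite G1" using less.prems by (simp add: G1_def)
    have "G1 \<subset> G" using ne by (auto simp: G1_def)
    then have "card G1 < card G" using less.prems by (rule psubset_card_mono[rotated])
    from less.hyps[OF this fG1] obtain G1' where G1': "G1' \<subseteq> G1"
      "\<forall>S. S \<subseteq> V \<and> card S = m \<longrightarrow> dg G1' S = 0 \<or> real (dg G1' S) \<ge> D"
      "real (card (G1 - G1')) \<le> D * real (card (shadow V m G1))" by blast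
    have sub: "shadow V m G1 \<subseteq> shadow V m G - {S}"
    proof
      fix S' assume S': "S' \<in> shadow V m G1"
      have "card {e\<in>G1. S' \<subseteq> e} \<le> card {e\<in>G. S' \<subseteq> e}"
        using less.prems by (intro card_mono) (auto simp: G1_def)
      moreover have "S' \<noteq> S"
      proof
        assume "S' = S"
        then have E: "{e\<in>G1. S' \<subseteq> e} = {}" by (auto simp: G1_def)
        have "card {e\<in>G1. S' \<subseteq> e} = 0" by (simp only: E card.empty)
        then show False using S' by (simp add: shadow_def dg_def)
      qed
      ultimately show "S' \<in> shadow V m G - {S}" using S' by (auto simp: shadow_def dg_def)
    qed
    have Sin: "S \<in> shadow V m G" using S by (auto simp: shadow_def)
    have fsh: "finite (shadow V m G)" using fV by (rule finite_shadow)
    have "card (shadow V m G1) \<le> card (shadow V m G - {S})" using fsh sub by (intro card_mono) auto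
    also have "\<dots> = card (shadow V m G) - 1" using Sin fsh by simp
    finally have csh: "real (card (shadow V m G1)) \<le> real (card (shadow V m G)) - 1"
      using Sin fsh by (metis Nat.add_diff_assoc2 card_0_eq diff_add_cancel empty_iff
          less_one linorder_not_less of_nat_1 of_nat_diff of_nat_le_iff)
    have "G - G1' = {e\<in>G. S \<subseteq> e} \<union> (G1 - G1')" using G1' by (auto simp: G1_def)
    then have "card (G - G1') = card {e\<in>G. S \<subseteq> e} + card (G1 - G1')"
      using less.prems by (simp add: card_Un_disjoint G1_def Diff_Int_distrib2) (subst card_Un_disjoint; auto)
    then have "real (card (G - G1')) = real (dg G S) + real (card (G1 - G1'))" by (simp add: dg_def)
    also have "\<dots> \<le> D + D * (real (card (shadow V m G)) - 1)"
      using S(4) G1'(3) csh D0 by (smt (verit) mult_left_mono)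
    also have "\<dots> = D * real (card (shadow V m G))" by (simp add: algebra_simps)
    finally show ?thesis using G1' by (intro exI[of _ G1']) (auto simp: G1_def)
  qed
qed

lemma extend:
  assumes Bs: "\<forall>i<m. B i \<subseteq> V \<and> card (B i) = t"
    and Bd: "\<forall>i<m. \<forall>j<m. i \<noteq> j \<longrightarrow> B i \<inter> B j = {}"
    and Bt: "\<forall>x. (\<forall>i<m. x i \<in> B i) \<longrightarrow> x ` {..<m} \<in> C"
    and W: "W \<subseteq> V" "card W = t" and R: "\<forall>w\<in>W. \<forall>S\<in>C. w \<notin> S \<and> insert w S \<in> G"
    and fV: "finite V"
  shows "\<forall>i<Suc m. (B(m := W)) i \<subseteq> V \<and> card ((B(m := W)) i) = t"
    "\<forall>i<Suc m. \<forall>j<Suc m. i \<noteq> j \<longrightarrow> (B(m := W)) i \<inter> (B(m := W)) j = {}"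
    "\<forall>x. (\<forall>i<Suc m. x i \<in> (B(m := W)) i) \<longrightarrow> x ` {..<Suc m} \<in> G"
proof -
  have dW: "B i \<inter> W = {}" if i: "i < m" for i
  proof (rule ccontr)
    assume "B i \<inter> W \<noteq> {}"
    then obtain b where b: "b \<in> B i" "b \<in> W" by auto
    have fB: "finite (B j)" if "j < m" for j using Bs that fV finite_subset by blast
    have "t > 0" using b i Bs fB[OF i] by (metis card_gt_0_iff empty_iff)
    then have neB: "B j \<noteq> {}" if "j < m" for j using Bs that by fastforce
    define x where "x = (\<lambda>j. if j = i then b else SOME y. y \<in> B j)"
    have "\<forall>j<m. x j \<in> B j"
      using b neB by (auto simp: x_def some_in_eq)
    then have xC: "x ` {..<m} \<in> C" using Bt by blast
    have "b \<in> x ` {..<m}" using i by (auto simp: x_def intro!: image_eqI[of _ _ i])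
    moreover have "b \<notin> x ` {..<m}" using bspec[OF bspec[OF R b(2)] xC] by (rule conjunct1)
    ultimately show False by contradiction
  qed
  show "\<forall>i<Suc m. (B(m := W)) i \<subseteq> V \<and> card ((B(m := W)) i) = t"
    using Bs W by (auto simp: less_Suc_eq)
  show "\<forall>i<Suc m. \<forall>j<Suc m. i \<noteq> j \<longrightarrow> (B(m := W)) i \<inter> (B(m := W)) j = {}"
    using Bd dW by (auto simp: less_Suc_eq)
  show "\<forall>x. (\<forall>i<Suc m. x i \<in> (B(m := W)) i) \<longrightarrow> x ` {..<Suc m} \<in> G"
  proof (intro allI impI)
    fix x assume x: "\<forall>i<Suc m. x i \<in> (B(m := W)) i"
    have "\<forall>i<m. x i \<in> B i"
    proof (intro allI impI)
      fix i assume "i < m" then show "x i \<in> B i" using x[rule_format, of i] by simp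
    qed
    then have "x ` {..<m} \<in> C" using Bt by blast
    moreover have "x m \<in> W" using x by auto
    ultimately have "insert (x m) (x ` {..<m}) \<in> G" using R by blast
    then show "x ` {..<Suc m} \<in> G" by (simp add: lessThan_Suc)
  qed
qed

lemma binom_rel: "Suc m * (n choose Suc m) = (n - m) * (n choose m)"
  using times_binomial_minus1_eq[of "Suc m" n] binomial_absorb_comp[of n m] by simp

lemma shadow_lower:
  assumes fV: "finite V" and G: "G \<subseteq> {e. e \<subseteq> V \<and> card e = Suc m}"
  shows "card G \<le> card (shadow V m G) * card V"
proof -
  define f where "f e = (e - {SOME w. w \<in> e}, SOME w. w \<in> e)" for e :: "'a set"
  have "G \<subseteq> Pow V" using G by blast
  then have fG: "finite G" using fV by (simp add: finite_subset)
  have ne: "e \<noteq> {}" if "e \<in> G" for e using subsetD[OF G that] by auto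
  have inj: "inj_on f G"
  proof (rule inj_onI)
    fix e e' assume e: "e \<in> G" "e' \<in> G" and eq: "f e = f e'"
    have "(SOME w. w \<in> e) \<in> e" using ne[OF e(1)] by (simp add: some_in_eq)
    moreover have "(SOME w. w \<in> e') \<in> e'" using ne[OF e(2)] by (simp add: some_in_eq)
    ultimately show "e = e'" using eq unfolding f_def by (metis insert_Diff prod.inject)
  qed
  have img: "f ` G \<subseteq> shadow V m G \<times> V"
  proof
    fix p assume "p \<in> f ` G"
    then obtain e where e: "e \<in> G" "p = f e" by auto
    define w where "w = (SOME w. w \<in> e)"
    have w: "w \<in> e" using ne[OF e(1)] by (simp add: some_in_eq w_def)
    have ce: "card e = Suc m" "e \<subseteq> V" using subsetD[OF G e(1)] by auto
    then have fe: "finite e" using fV finite_subset by blast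
    have "e \<in> {e'\<in>G. e - {w} \<subseteq> e'}" using e by auto
    moreover have "finite {e'\<in>G. e - {w} \<subseteq> e'}" using fG by simp
    ultimately have "0 < dg G (e - {w})" unfolding dg_def by (metis card_gt_0_iff empty_iff)
    moreover have "card (e - {w}) = m" using ce w fe by simp
    ultimately show "p \<in> shadow V m G \<times> V" using e w ce
      by (auto simp: shadow_def f_def w_def[symmetric])
  qed
  have "card G = card (f ` G)" using inj by (simp add: card_image)
  also have "\<dots> \<le> card (shadow V m G \<times> V)"
    using img fV finite_shadow[OF fV] by (intro card_mono) auto
  also have "\<dots> = card (shadow V m G) * card V" by (simp add: card_cartesian_product)
  finally show ?thesis .
qed

lemma erdos:
  "\<forall>\<epsilon>>0. \<forall>t. \<exists>N. \<forall>(V::'a set) G. finite V \<and> card V \<ge> N \<and> G \<subseteq> {e. e \<subseteq> V \<and> card e = m}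
     \<and> real (card G) \<ge> \<epsilon> * real (card V choose m) \<longrightarrow>
     (\<exists>B. (\<forall>i<m. B i \<subseteq> V \<and> card (B i) = t) \<and> (\<forall>i<m. \<forall>j<m. i \<noteq> j \<longrightarrow> B i \<inter> B j = {})
          \<and> (\<forall>x. (\<forall>i<m. x i \<in> B i) \<longrightarrow> x ` {..<m} \<in> G))"
proof (induction m)
  case 0
  show ?case
  proof (intro allI impI)
    fix \<epsilon> :: real and t :: nat assume e0: "\<epsilon> > 0"
    show "\<exists>N. \<forall>(V::'a set) G. finite V \<and> card V \<ge> N \<and> G \<subseteq> {e. e \<subseteq> V \<and> card e = 0}
     \<and> real (card G) \<ge> \<epsilon> * real (card V choose 0) \<longrightarrow>
     (\<exists>B. (\<forall>i<(0::nat). B i \<subseteq> V \<and> card (B i) = t) \<and> (\<forall>i<(0::nat). \<forall>j<0. i \<noteq> j \<longrightarrow> B i \<inter> B j = {})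
          \<and> (\<forall>x. (\<forall>i<(0::nat). x i \<in> B i) \<longrightarrow> x ` {..<0} \<in> G))"
    proof (rule exI[of _ 0], intro allI impI)
      fix V :: "'a set" and G
      assume H: "finite V \<and> card V \<ge> 0 \<and> G \<subseteq> {e. e \<subseteq> V \<and> card e = 0}
        \<and> real (card G) \<ge> \<epsilon> * real (card V choose 0)"
      then have "card G > 0" using e0 by simp
      then have "G \<noteq> {}" by auto
      then obtain e where e: "e \<in> G" by blast
      then have "e \<subseteq> V" "card e = 0" using H by auto
      then have "e = {}" using H finite_subset by (metis card_0_eq)
      then have eG: "{} \<in> G" using e by simp
      show "\<exists>B. (\<forall>i<(0::nat). B i \<subseteq> V \<and> card (B i) = t) \<and> (\<forall>i<(0::nat). \<forall>j<0. i \<noteq> j \<longrightarrow> B i \<inter> B j = {})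
          \<and> (\<forall>x. (\<forall>i<(0::nat). x i \<in> B i) \<longrightarrow> x ` {..<0} \<in> G)"
        using eG by auto
    qed
  qed
next
  case (Suc m)
  show ?case
  proof (intro allI impI)
    fix \<epsilon> :: real and t :: nat assume e0: "\<epsilon> > 0"
    define \<delta> where "\<delta> = \<epsilon> / (4 * real (Suc m))"
    define \<epsilon>1 where "\<epsilon>1 = \<delta> * (\<delta> / 2) ^ t"
    have d0: "\<delta> > 0" using e0 by (simp add: \<delta>_def)
    have e10: "\<epsilon>1 > 0" using d0 by (simp add: \<epsilon>1_def)
    obtain N1 where N1: "\<forall>(V::'a set) G. finite V \<and> card V \<ge> N1 \<and> G \<subseteq> {e. e \<subseteq> V \<and> card e = m}
     \<and> real (card G) \<ge> \<epsilon>1 * real (card V choose m) \<longrightarrow>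
     (\<exists>B. (\<forall>i<m. B i \<subseteq> V \<and> card (B i) = t) \<and> (\<forall>i<m. \<forall>j<m. i \<noteq> j \<longrightarrow> B i \<inter> B j = {})
          \<and> (\<forall>x. (\<forall>i<m. x i \<in> B i) \<longrightarrow> x ` {..<m} \<in> G))"
      using spec[OF mp[OF spec[OF Suc.IH, of \<epsilon>1] e10], of t] by (elim exE) (rule that)
    define N where "N = N1 + nat \<lceil>2 * real t / \<delta>\<rceil> + 2 * m + t + 1"
    show "\<exists>N. \<forall>(V::'a set) G. finite V \<and> card V \<ge> N \<and> G \<subseteq> {e. e \<subseteq> V \<and> card e = Suc m}
     \<and> real (card G) \<ge> \<epsilon> * real (card V choose Suc m) \<longrightarrow>
     (\<exists>B. (\<forall>i<Suc m. B i \<subseteq> V \<and> card (B i) = t) \<and> (\<forall>i<Suc m. \<forall>j<Suc m. i \<noteq> j \<longrightarrow> B i \<inter> B j = {})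
          \<and> (\<forall>x. (\<forall>i<Suc m. x i \<in> B i) \<longrightarrow> x ` {..<Suc m} \<in> G))"
    proof (rule exI[of _ N], intro allI impI)
      fix V :: "'a set" and G
      assume H: "finite V \<and> card V \<ge> N \<and> G \<subseteq> {e. e \<subseteq> V \<and> card e = Suc m}
        \<and> real (card G) \<ge> \<epsilon> * real (card V choose Suc m)"
      define n where "n = card V"
      have fV: "finite V" and nN: "n \<ge> N" and G: "G \<subseteq> {e. e \<subseteq> V \<and> card e = Suc m}"
        and cG: "real (card G) \<ge> \<epsilon> * real (n choose Suc m)" using H by (auto simp: n_def)
      have nN1: "n \<ge> N1" and n2m: "n \<ge> 2 * m + 1" and nt: "t < n" using nN by (auto simp: N_def)
      have "real n \<ge> 2 * real t / \<delta>" using nN unfolding N_def by linarith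
      then have tD: "real t \<le> \<delta> * real n / 2" using d0 by (simp add: field_simps)
      have npos: "real n > 0" using nt by simp
      define c where "c = real (n choose m)"
      have c0: "c \<ge> 0" by (simp add: c_def)
      have "G \<subseteq> Pow V" using G by blast
      then have fG: "finite G" using fV by (simp add: finite_subset)
      obtain G' where G': "G' \<subseteq> G"
        "\<forall>S. S \<subseteq> V \<and> card S = m \<longrightarrow> dg G' S = 0 \<or> real (dg G' S) \<ge> \<delta> * real n"
        "real (card (G - G')) \<le> (\<delta> * real n) * real (card (shadow V m G))"
        using clean[OF fV _ fG, of "\<delta> * real n" m] d0 by auto
      have "real (card (shadow V m G)) \<le> c"
        using card_shadow_le[OF fV, of m G] by (simp add: c_def n_def)
      then have rem: "real (card (G - G')) \<le> \<delta> * real n * c"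
        using G'(3) d0 npos by (smt (verit) mult_left_mono mult_pos_pos)
      have "real (Suc m) * real (n choose Suc m) = real (n - m) * c"
        unfolding c_def using binom_rel[of m n] by (metis of_nat_mult)
      moreover have "real (n - m) \<ge> real n / 2" using n2m by linarith
      ultimately have "real (Suc m) * real (n choose Suc m) \<ge> real n / 2 * c"
        using c0 by (metis mult_right_mono)
      then have "real (n choose Suc m) \<ge> real n * c / (2 * real (Suc m))"
        by (simp add: field_simps)
      then have "\<epsilon> * real (n choose Suc m) \<ge> \<epsilon> * (real n * c / (2 * real (Suc m)))"
        by (rule mult_left_mono[OF _ less_imp_le[OF e0]])
      also have "\<epsilon> * (real n * c / (2 * real (Suc m))) = 2 * (\<delta> * real n * c)"
        by (simp add: \<delta>_def field_simps)
      finally have cG2: "real (card G) \<ge> 2 * (\<delta> * real n * c)" using cG by linarith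
      have "card G = card G' + card (G - G')" using G'(1) fG
        by (metis card_Diff_subset card_mono diff_add_inverse le_add_diff_inverse finite_subset)
      then have cG': "real (card G') \<ge> \<delta> * real n * c" using cG2 rem by simp
      define Sh where "Sh = shadow V m G'"
      have G'sub: "G' \<subseteq> {e. e \<subseteq> V \<and> card e = Suc m}" using G'(1) G by blast
      have "card G' \<le> card Sh * n" unfolding Sh_def n_def by (rule shadow_lower[OF fV G'sub])
      then have "\<delta> * real n * c \<le> real (card Sh) * real n" using cG'
        by (metis of_nat_le_iff of_nat_mult order_trans)
      then have cSh: "real (card Sh) \<ge> \<delta> * c" using npos by (simp add: field_simps)
      have fSh: "finite Sh" unfolding Sh_def by (rule finite_shadow[OF fV])
      have deg: "\<forall>S\<in>Sh. real (card {w\<in>V. w \<notin> S \<and> insert w S \<in> G'}) \<ge> \<delta> * real n"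
      proof
        fix S assume S: "S \<in> Sh"
        then have S': "S \<subseteq> V" "card S = m" "0 < dg G' S" by (auto simp: Sh_def shadow_def)
        have "finite S" using S'(1) fV finite_subset by blast
        then have "card {w\<in>V. w \<notin> S \<and> insert w S \<in> G'} = dg G' S"
          using card_link[OF G'sub _ S'(2)] by (simp add: dg_def)
        then show "real (card {w\<in>V. w \<notin> S \<and> insert w S \<in> G'}) \<ge> \<delta> * real n"
          using G'(2) S' by auto
      qed
      obtain W C where WC: "W \<subseteq> V" "card W = t" "C \<subseteq> Sh"
        "\<forall>w\<in>W. \<forall>S\<in>C. w \<notin> S \<and> insert w S \<in> G'"
        "real (card C) \<ge> real (card Sh) * (\<delta> * real n / (2 * real (card V))) ^ t"
        using greedy[OF fV fSh deg, of "{}" Sh t] nt tD by (auto simp: n_def)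
      have eq: "(\<delta> * real n / (2 * real (card V))) = \<delta> / 2" using npos by (simp add: n_def)
      have "real (card C) \<ge> real (card Sh) * (\<delta> / 2) ^ t" using WC(5) by (simp only: eq)
      moreover have "real (card Sh) * (\<delta> / 2) ^ t \<ge> \<delta> * c * (\<delta> / 2) ^ t"
        using cSh d0 by (simp add: mult_right_mono)
      ultimately have cC: "real (card C) \<ge> \<epsilon>1 * c" by (simp add: \<epsilon>1_def algebra_simps)
      have Csub: "C \<subseteq> {e. e \<subseteq> V \<and> card e = m}" using WC(3) by (auto simp: Sh_def shadow_def)
      have hyp: "finite V \<and> card V \<ge> N1 \<and> C \<subseteq> {e. e \<subseteq> V \<and> card e = m} \<and> real (card C) \<ge> \<epsilon>1 * real (card V choose m)"
        using fV nN1 Csub cC unfolding c_def n_def by simp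
      obtain B where B: "\<forall>i<m. B i \<subseteq> V \<and> card (B i) = t" "\<forall>i<m. \<forall>j<m. i \<noteq> j \<longrightarrow> B i \<inter> B j = {}"
          "\<forall>x. (\<forall>i<m. x i \<in> B i) \<longrightarrow> x ` {..<m} \<in> C"
        using mp[OF spec[OF spec[OF N1, of V], of C] hyp] by blast
      note ext = extend[OF B WC(1,2,4) fV]
      show "\<exists>B. (\<forall>i<Suc m. B i \<subseteq> V \<and> card (B i) = t) \<and> (\<forall>i<Suc m. \<forall>j<Suc m. i \<noteq> j \<longrightarrow> B i \<inter> B j = {})
          \<and> (\<forall>x. (\<forall>i<Suc m. x i \<in> B i) \<longrightarrow> x ` {..<Suc m} \<in> G)"
        using ext G'(1) by (intro exI[of _ "B(m := W)"]) blast
    qed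
  qed
qed

lemma link_bound:
  assumes fV: "finite V" and E: "E \<subseteq> {e. e \<subseteq> V \<and> card e = Suc m}" and m1: "m \<ge> 1" and v: "v \<in> V"
    and codeg: "\<forall>S. S \<subseteq> V \<and> card S = m \<longrightarrow> real (card {e\<in>E. S \<subseteq> e}) \<ge> D"
  shows "real m * real (card {S. S \<subseteq> V \<and> card S = m \<and> v \<notin> S \<and> insert v S \<in> E})
          \<ge> real (card (V - {v}) choose (m - 1)) * D"
proof -
  define L where "L = {S. S \<subseteq> V \<and> card S = m \<and> v \<notin> S \<and> insert v S \<in> E}"
  define Ts where "Ts = {T. T \<subseteq> V - {v} \<and> card T = m - 1}"
  define Q where "Q T = {w\<in>V. w \<notin> insert v T \<and> insert w (insert v T) \<in> E}" for T
  define P where "P = (SIGMA T:Ts. Q T)"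
  have fL: "finite L" by (rule finite_subset[of _ "Pow V"]) (auto simp: L_def fV)
  have fTs: "finite Ts" by (rule finite_subset[of _ "Pow V"]) (auto simp: Ts_def fV)
  have cTs: "card Ts = card (V - {v}) choose (m - 1)" unfolding Ts_def by (rule n_subsets) (simp add: fV)
  have QD: "real (card (Q T)) \<ge> D" if T: "T \<in> Ts" for T
  proof -
    have fT: "finite T" using T fV by (auto simp: Ts_def intro: finite_subset)
    have vT: "v \<notin> T" using T by (auto simp: Ts_def)
    have cT: "card (insert v T) = m" using fT vT T m1 by (simp add: Ts_def)
    have "card (Q T) = card {e\<in>E. insert v T \<subseteq> e}"
      unfolding Q_def using card_link[OF E _ cT] fT by simp
    moreover have "insert v T \<subseteq> V" using T v by (auto simp: Ts_def)
    ultimately show ?thesis using codeg[rule_format, of "insert v T"] cT by simp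
  qed
  have fQ: "finite (Q T)" for T using fV by (simp add: Q_def)
  have "real (card P) = (\<Sum>T\<in>Ts. real (card (Q T)))" unfolding P_def using fTs fQ by simp
  also have "\<dots> \<ge> (\<Sum>T\<in>Ts. D)" using QD by (rule sum_mono)
  finally have cP: "real (card P) \<ge> real (card Ts) * D" by simp
  define f where "f = (\<lambda>(T::'a set, w). (insert w T, w))"
  have inj: "inj_on f P"
  proof (rule inj_onI)
    fix x y assume x: "x \<in> P" and y: "y \<in> P" and eq: "f x = f y"
    obtain T w where xT: "x = (T, w)" by fastforce
    obtain T' w' where yT: "y = (T', w')" by fastforce
    have "w \<notin> T" "w' \<notin> T'" using x y xT yT by (auto simp: P_def Q_def)
    then show "x = y" using eq xT yT unfolding f_def by auto
  qed
  have img: "f ` P \<subseteq> (SIGMA S:L. S)"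
  proof
    fix y assume "y \<in> f ` P"
    then obtain T w where Tw: "T \<in> Ts" "w \<in> Q T" "y = (insert w T, w)"
      by (auto simp: f_def P_def)
    have fT: "finite T" using Tw fV by (auto simp: Ts_def intro: finite_subset)
    have "insert w T \<in> L" using Tw fT m1
      by (auto simp: L_def Ts_def Q_def insert_commute)
    then show "y \<in> (SIGMA S:L. S)" using Tw by auto
  qed
  have fSig: "finite (SIGMA S:L. S)" using fL
    by (rule finite_SigmaI) (auto simp: L_def intro: finite_subset[OF _ fV])
  have "card P = card (f ` P)" using inj by (simp add: card_image)
  also have "\<dots> \<le> card (SIGMA S:L. S)"
    by (rule card_mono[OF fSig img])
  also have "\<dots> = (\<Sum>S\<in>L. card S)"
    using fL by (intro card_SigmaI) (auto simp: L_def fV intro: finite_subset)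
  also have "\<dots> = m * card L" by (simp add: L_def)
  finally have "card P \<le> m * card L" .
  then show ?thesis using cP cTs unfolding L_def
    by (metis (no_types, lifting) of_nat_le_iff of_nat_mult order_trans)
qed

lemma inj_fix:
  assumes fX: "finite X" and fY: "finite Y" and cXY: "card X \<le> card Y" and x0: "x0 \<in> X" and y0: "y0 \<in> Y"
  shows "\<exists>g. inj_on g X \<and> g ` X \<subseteq> Y \<and> g x0 = y0"
proof -
  have "card (X - {x0}) \<le> card (Y - {y0})" using fX fY cXY x0 y0 by (simp add: card_Diff_singleton)
  then obtain h where h: "h ` (X - {x0}) \<subseteq> Y - {y0}" "inj_on h (X - {x0})"
    using card_le_inj[of "X - {x0}" "Y - {y0}"] fX fY by auto
  define g where "g = h(x0 := y0)"
  have "inj_on g X"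
  proof (rule inj_onI)
    fix a b assume a: "a \<in> X" and b: "b \<in> X" and eq: "g a = g b"
    show "a = b"
    proof (cases "a = x0"; cases "b = x0")
      assume "a \<noteq> x0" "b \<noteq> x0" then show ?thesis using eq a b h(2) by (auto simp: g_def inj_on_def)
    next
      assume "a = x0" "b \<noteq> x0" then show ?thesis using eq b h(1) by (auto simp: g_def)
    next
      assume "a \<noteq> x0" "b = x0" then show ?thesis using eq a h(1) by (force simp: g_def)
    qed simp
  qed
  moreover have "g ` X \<subseteq> Y" using h(1) y0 by (auto simp: g_def)
  ultimately show ?thesis by (intro exI[of _ g]) (simp add: g_def)
qed

lemma embed:
  fixes c :: "'b \<Rightarrow> nat" and B :: "nat \<Rightarrow> 'a set"
  assumes k: "k \<ge> 1" and fVF: "finite VF" and EFs: "\<forall>e\<in>EF. e \<subseteq> VF"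
    and c: "c ` VF = {..<k}" and ce: "\<forall>e\<in>EF. \<forall>i<k. card {u\<in>e. c u = i} = 1"
    and Bs: "\<forall>i<k. B i \<subseteq> V \<and> card (B i) = card VF"
    and Bd: "\<forall>i<k. \<forall>j<k. i \<noteq> j \<longrightarrow> B i \<inter> B j = {}"
    and Bt: "\<forall>x. (\<forall>i<k. x i \<in> B i) \<longrightarrow> x ` {..<k} \<in> E"
    and v: "v \<in> B (k - 1)"
  shows "vertex_in_copy VF EF V E v"
proof -
  have "k - 1 \<in> c ` VF" using c k by auto
  then obtain u0 where u0: "u0 \<in> VF" "c u0 = k - 1" by auto
  define F where "F i = {u\<in>VF. c u = i}" for i
  have cVF: "card VF > 0" using u0 fVF card_gt_0_iff by blast
  have ex: "\<forall>i. \<exists>g. i < k \<longrightarrow> inj_on g (F i) \<and> g ` F i \<subseteq> B i \<and> (i = k - 1 \<longrightarrow> g u0 = v)"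
  proof
    fix i
    show "\<exists>g. i < k \<longrightarrow> inj_on g (F i) \<and> g ` F i \<subseteq> B i \<and> (i = k - 1 \<longrightarrow> g u0 = v)"
    proof (cases "i < k")
      case True
      have fB: "finite (B i)" using Bs True cVF by (metis card_ge_0_finite)
      have fF: "finite (F i)" using fVF by (simp add: F_def)
      have cF: "card (F i) \<le> card (B i)" using Bs True fVF by (simp add: F_def card_mono)
      show ?thesis
      proof (cases "i = k - 1")
        case True
        have "u0 \<in> F i" using u0 True by (simp add: F_def)
        then obtain g where "inj_on g (F i) \<and> g ` F i \<subseteq> B i \<and> g u0 = v"
          using inj_fix[OF fF fB cF _ ] v True by blast
        then show ?thesis by blast
      next
        case False
        obtain g where "g ` F i \<subseteq> B i" "inj_on g (F i)" using card_le_inj[OF fF fB cF] by blast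
        then show ?thesis using False by blast
      qed
    qed simp
  qed
  from choice[OF ex] obtain gg where gg: "\<forall>i. i < k \<longrightarrow> inj_on (gg i) (F i) \<and> gg i ` F i \<subseteq> B i \<and> (i = k - 1 \<longrightarrow> gg i u0 = v)"
    by blast
  define \<phi> where "\<phi> u = gg (c u) u" for u
  have cu: "c u < k" if "u \<in> VF" for u using c that by auto
  have \<phi>B: "\<phi> u \<in> B (c u)" if "u \<in> VF" for u
    using gg cu[OF that] that by (auto simp: \<phi>_def F_def)
  have inj: "inj_on \<phi> VF"
  proof (rule inj_onI)
    fix a b assume a: "a \<in> VF" and b: "b \<in> VF" and eq: "\<phi> a = \<phi> b"
    show "a = b"
    proof (cases "c a = c b")
      case True
      have "inj_on (gg (c a)) (F (c a))" using gg cu[OF a] by blast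
      moreover have "a \<in> F (c a)" "b \<in> F (c a)" using a b True by (auto simp: F_def)
      ultimately show ?thesis using eq True by (auto simp: \<phi>_def inj_on_def)
    next
      case False
      then have "B (c a) \<inter> B (c b) = {}" using Bd cu[OF a] cu[OF b] by blast
      then show ?thesis using \<phi>B[OF a] \<phi>B[OF b] eq by auto
    qed
  qed
  have sub: "\<phi> ` VF \<subseteq> V" using \<phi>B cu Bs by blast
  have vin: "v \<in> \<phi> ` VF"
  proof -
    have "k - 1 < k" using k by simp
    then have "\<phi> u0 = v" using gg u0 by (simp add: \<phi>_def)
    then show ?thesis using u0 by blast
  qed
  have edges: "\<forall>f\<in>EF. \<phi> ` f \<in> E"
  proof
    fix f assume f: "f \<in> EF"
    define x where "x i = \<phi> (THE u. u \<in> f \<and> c u = i)" for i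
    have the: "(THE u. u \<in> f \<and> c u = i) \<in> f \<and> c (THE u. u \<in> f \<and> c u = i) = i
       \<and> (\<forall>u\<in>f. c u = i \<longrightarrow> u = (THE u. u \<in> f \<and> c u = i))" if i: "i < k" for i
    proof -
      obtain a where a: "{u\<in>f. c u = i} = {a}" using ce f i by (meson card_1_singletonE)
      then have "(THE u. u \<in> f \<and> c u = i) = a" by (intro the_equality) auto
      then show ?thesis using a by auto
    qed
    have "\<forall>i<k. x i \<in> B i"
    proof (intro allI impI)
      fix i assume i: "i < k"
      have "(THE u. u \<in> f \<and> c u = i) \<in> VF" using the[OF i] EFs f by blast
      then have "x i \<in> B (c (THE u. u \<in> f \<and> c u = i))" unfolding x_def by (rule \<phi>B)
      moreover have "c (THE u. u \<in> f \<and> c u = i) = i" using the[OF i] by blast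
      ultimately show "x i \<in> B i" by simp
    qed
    then have "x ` {..<k} \<in> E" using Bt by blast
    moreover have "\<phi> ` f = x ` {..<k}"
    proof
      show "\<phi> ` f \<subseteq> x ` {..<k}"
      proof
        fix y assume "y \<in> \<phi> ` f"
        then obtain u where u: "u \<in> f" "y = \<phi> u" by auto
        have cuk: "c u < k" using cu u EFs f by blast
        then have "u = (THE u'. u' \<in> f \<and> c u' = c u)" using the[OF cuk] u by blast
        then have "y = x (c u)" using u by (simp add: x_def)
        then show "y \<in> x ` {..<k}" using cuk by auto
      qed
    next
      show "x ` {..<k} \<subseteq> \<phi> ` f" using the by (auto simp: x_def)
    qed
    ultimately show "\<phi> ` f \<in> E" by simp
  qed
  show ?thesis unfolding vertex_in_copy_def using inj sub edges vin by blast
qed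

theorem mainTheorem12:
  fixes k :: nat and VF :: "'b set" and EF :: "'b set set"
  assumes "k \<ge> 2"
    and "kgraph k VF EF"
    and "kpartite k VF EF"
  shows "COVER k VF EF"
proof -
  obtain m where km: "k = Suc m" using assms(1) by (cases k) auto
  have m1: "m \<ge> 1" using assms(1) km by simp
  have fVF: "finite VF" and EFs: "\<forall>e\<in>EF. e \<subseteq> VF" using assms(2) by (auto simp: kgraph_def)
  obtain c where c: "c ` VF = {..<k}" and ce: "\<forall>e\<in>EF. \<forall>i<k. card {v\<in>e. c v = i} = 1"
    using assms(3) by (auto simp: kpartite_def)
  define t where "t = card VF"
  have "VF \<noteq> {}" using c km by auto
  then have t1: "t \<ge> 1" using fVF by (simp add: t_def Suc_leI card_gt_0_iff)
  show ?thesis unfolding COVER_def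
  proof (intro allI impI)
    fix p \<alpha> :: real assume pa: "0 < p \<and> p < 1 \<and> 0 < \<alpha> \<and> \<alpha> < 1"
    then have a0: "\<alpha> > 0" by simp
    define \<epsilon> where "\<epsilon> = \<alpha> * (\<alpha> / 2) ^ (t - 1)"
    have e0: "\<epsilon> > 0" using a0 by (simp add: \<epsilon>_def)
    obtain N where N: "\<forall>(V::nat set) G. finite V \<and> card V \<ge> N \<and> G \<subseteq> {e. e \<subseteq> V \<and> card e = m}
     \<and> real (card G) \<ge> \<epsilon> * real (card V choose m) \<longrightarrow>
     (\<exists>B. (\<forall>i<m. B i \<subseteq> V \<and> card (B i) = t) \<and> (\<forall>i<m. \<forall>j<m. i \<noteq> j \<longrightarrow> B i \<inter> B j = {})
          \<and> (\<forall>x. (\<forall>i<m. x i \<in> B i) \<longrightarrow> x ` {..<m} \<in> G))"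
      using spec[OF mp[OF spec[OF erdos[of m], of \<epsilon>] e0], of t] by (elim exE) (rule that)
    define n0 where "n0 = N + nat \<lceil>2 * real t / \<alpha>\<rceil> + t + 1"
    show "\<exists>n0. \<exists>\<mu>::real. \<mu> > 0 \<and>
           (\<forall>(V::nat set) E. dense_kgraph k V E p \<mu> \<and>
               min_codeg_ge k V E (\<alpha> * real (card V)) \<and> card V \<ge> n0
               \<longrightarrow> (\<forall>v\<in>V. vertex_in_copy VF EF V E v))"
    proof (rule exI[of _ n0], rule exI[of _ 1], intro conjI allI impI ballI)
      show "(0::real) < 1" by simp
    next
      fix V :: "nat set" and E v
      assume H: "dense_kgraph k V E p 1 \<and> min_codeg_ge k V E (\<alpha> * real (card V)) \<and> n0 \<le> card V"
        and v: "v \<in> V"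
      define n where "n = card V"
      have fV: "finite V" and Esub: "E \<subseteq> {e. e \<subseteq> V \<and> card e = Suc m}"
        using H km by (auto simp: dense_kgraph_def kgraph_def)
      have codeg: "\<forall>S. S \<subseteq> V \<and> card S = m \<longrightarrow> real (card {e\<in>E. S \<subseteq> e}) \<ge> \<alpha> * real n"
        using H km by (simp add: min_codeg_ge_def n_def)
      have nN: "n \<ge> N" and nt: "t < n" using H by (auto simp: n0_def n_def)
      have "real n \<ge> 2 * real t / \<alpha>" using H unfolding n0_def n_def by linarith
      then have tD: "real t \<le> \<alpha> * real n / 2" using a0 by (simp add: field_simps)
      have npos: "real n > 0" using nt by simp
      define L where "L = {S. S \<subseteq> V \<and> card S = m \<and> v \<notin> S \<and> insert v S \<in> E}"
      have fL: "finite L" by (rule finite_subset[of _ "Pow V"]) (auto simp: L_def fV)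
      have lb: "real m * real (card L) \<ge> real (card (V - {v}) choose (m - 1)) * (\<alpha> * real n)"
        unfolding L_def by (rule link_bound[OF fV Esub m1 v codeg])
      have "m * (n choose m) = n * ((n - 1) choose (m - 1))"
        using m1 by (intro times_binomial_minus1_eq) simp
      then have "real m * real (n choose m) = real n * real ((n - 1) choose (m - 1))"
        by (metis of_nat_mult)
      moreover have "card (V - {v}) = n - 1" using v fV by (simp add: n_def)
      ultimately have "real m * real (card L) \<ge> real m * (\<alpha> * real (n choose m))"
        using lb by (simp add: algebra_simps)
      then have cL: "real (card L) \<ge> \<alpha> * real (n choose m)" using m1 by simp
      have deg: "\<forall>S\<in>L. real (card {w\<in>V. w \<notin> S \<and> insert w S \<in> E}) \<ge> \<alpha> * real n"
      proof
        fix S assume S: "S \<in> L"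
        then have S': "S \<subseteq> V" "card S = m" by (auto simp: L_def)
        have "finite S" using S'(1) fV finite_subset by blast
        then have "card {w\<in>V. w \<notin> S \<and> insert w S \<in> E} = card {e\<in>E. S \<subseteq> e}"
          using card_link[OF Esub _ S'(2)] by simp
        then show "real (card {w\<in>V. w \<notin> S \<and> insert w S \<in> E}) \<ge> \<alpha> * real n"
          using codeg S' by simp
      qed
      have RW0: "\<forall>w\<in>{v}. \<forall>S\<in>L. w \<notin> S \<and> insert w S \<in> E" by (simp add: L_def)
      have c1: "card {v} + (t - 1) < card V" "real (card {v} + (t - 1)) \<le> \<alpha> * real n / 2"
        using nt tD t1 by (auto simp: n_def)
      obtain W C where WC: "{v} \<subseteq> W" "W \<subseteq> V" "card W = card {v} + (t - 1)" "C \<subseteq> L"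
        "\<forall>w\<in>W. \<forall>S\<in>C. w \<notin> S \<and> insert w S \<in> E"
        "real (card C) \<ge> real (card L) * (\<alpha> * real n / (2 * real (card V))) ^ (t - 1)"
        using greedy[OF fV fL deg _ _ RW0, of "t - 1"] v c1 by blast
      have cW: "card W = t" using WC(3) t1 by simp
      have eq: "(\<alpha> * real n / (2 * real (card V))) = \<alpha> / 2" using npos by (simp add: n_def)
      have "real (card C) \<ge> real (card L) * (\<alpha> / 2) ^ (t - 1)" using WC(6) by (simp only: eq)
      moreover have "real (card L) * (\<alpha> / 2) ^ (t - 1) \<ge> \<alpha> * real (n choose m) * (\<alpha> / 2) ^ (t - 1)"
        using cL a0 by (simp add: mult_right_mono)
      ultimately have cC: "real (card C) \<ge> \<epsilon> * real (n choose m)" by (simp add: \<epsilon>_def algebra_simps)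
      have Csub: "C \<subseteq> {e. e \<subseteq> V \<and> card e = m}" using WC(4) by (auto simp: L_def)
      have hyp: "finite V \<and> card V \<ge> N \<and> C \<subseteq> {e. e \<subseteq> V \<and> card e = m} \<and> real (card C) \<ge> \<epsilon> * real (card V choose m)"
        using fV nN Csub cC unfolding n_def by simp
      obtain B where B: "\<forall>i<m. B i \<subseteq> V \<and> card (B i) = t" "\<forall>i<m. \<forall>j<m. i \<noteq> j \<longrightarrow> B i \<inter> B j = {}"
          "\<forall>x. (\<forall>i<m. x i \<in> B i) \<longrightarrow> x ` {..<m} \<in> C"
        using mp[OF spec[OF spec[OF N, of V], of C] hyp] by blast
      note ext = extend[OF B WC(2) cW WC(5) fV]
      have vB: "v \<in> (B(m := W)) (k - 1)" using WC(1) km by simp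
      show "vertex_in_copy VF EF V E v"
        by (rule embed[of k VF EF c "B(m := W)" V E v]) (use ext km fVF EFs c ce vB t_def in auto)
    qed
  qed
qed

end
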